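(* Let $\mathcal{A}$ be a $C^*$-algebra (a Hilbert module over itself with $\langle a,b\rangle=a^*b$), $\mathcal{M}$ a Hilbert $C^*$-module over $\mathcal{A}$, and $F:\mathcal{M}\to\mathcal{A}$ a bounded adjointable operator which is not $\mathcal{A}$-compact. Let $K>0$. Then there exists $\delta>0$ such that for every $z\in\mathcal{A}$ there exists $x\in\mathcal{M}$ with $\|x\|\le1$ such that $\|z\alpha-F(x)\|>\delta$ for every $\alpha\in\mathcal{A}$ with $\|\alpha\|\le K$. In particular $\|F(x)\|>\delta$.
   Context: For $x\in\mathcal{N}$, $y\in\mathcal{M}$, $\theta_{x,y}(z)=x\langle y,z\rangle$; an operator $\mathcal{M}\to\mathcal{N}$ is $\mathcal{A}$-compact if it lies in the norm closure of the linear span of all such $\theta_{x,y}$. *)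

theory Defs
  imports "HOL-Analysis.Analysis"
begin

text \<open>HOL has no complex vector spaces, so complex scalar multiplication is an
explicit parameter extending the real scaling of the normed type.\<close>

definition complex_scaling :: "(complex \<Rightarrow> 'v::real_normed_vector \<Rightarrow> 'v) \<Rightarrow> bool" where
  "complex_scaling sc \<longleftrightarrow>
     (\<forall>c d v. sc (c + d) v = sc c v + sc d v) \<and>
     (\<forall>c v w. sc c (v + w) = sc c v + sc c w) \<and>
     (\<forall>c d v. sc (c * d) v = sc c (sc d v)) \<and>
     (\<forall>r v. sc (complex_of_real r) v = r *\<^sub>R v) \<and>
     (\<forall>c v. norm (sc c v) = cmod c * norm v)"

definition cstar_algebra ::
  "(complex \<Rightarrow> 'a::{real_normed_algebra,banach} \<Rightarrow> 'a) \<Rightarrow> ('a \<Rightarrow> 'a) \<Rightarrow> bool" where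
  "cstar_algebra scA st \<longleftrightarrow>
     complex_scaling scA \<and>
     (\<forall>c a b. scA c (a * b) = scA c a * b \<and> scA c (a * b) = a * scA c b) \<and>
     (\<forall>a b. st (a + b) = st a + st b) \<and>
     (\<forall>c a. st (scA c a) = scA (cnj c) (st a)) \<and>
     (\<forall>a. st (st a) = a) \<and>
     (\<forall>a b. st (a * b) = st b * st a) \<and>
     (\<forall>a. norm (st a * a) = (norm a)\<^sup>2)"

definition cstar_positive :: "('a::times \<Rightarrow> 'a) \<Rightarrow> 'a \<Rightarrow> bool" where
  "cstar_positive st a \<longleftrightarrow> (\<exists>b. a = st b * b)"

definition hilbert_cstar_module ::
  "(complex \<Rightarrow> 'a::{real_normed_algebra,banach} \<Rightarrow> 'a) \<Rightarrow> ('a \<Rightarrow> 'a) \<Rightarrow>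
   (complex \<Rightarrow> 'm::{real_normed_vector,banach} \<Rightarrow> 'm) \<Rightarrow> ('m \<Rightarrow> 'a \<Rightarrow> 'm) \<Rightarrow>
   ('m \<Rightarrow> 'm \<Rightarrow> 'a) \<Rightarrow> bool" where
  "hilbert_cstar_module scA st scM act ip \<longleftrightarrow>
     cstar_algebra scA st \<and> complex_scaling scM \<and>
     (\<forall>x y a. act (x + y) a = act x a + act y a) \<and>
     (\<forall>x a b. act x (a + b) = act x a + act x b) \<and>
     (\<forall>x a b. act x (a * b) = act (act x a) b) \<and>
     (\<forall>c x a. scM c (act x a) = act (scM c x) a \<and> scM c (act x a) = act x (scA c a)) \<and>
     (\<forall>x y z. ip x (y + z) = ip x y + ip x z) \<and>
     (\<forall>c x y. ip x (scM c y) = scA c (ip x y)) \<and>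
     (\<forall>x y a. ip x (act y a) = ip x y * a) \<and>
     (\<forall>x y. ip y x = st (ip x y)) \<and>
     (\<forall>x. cstar_positive st (ip x x)) \<and>
     (\<forall>x. ip x x = 0 \<longrightarrow> x = 0) \<and>
     (\<forall>x. norm x = sqrt (norm (ip x x)))"

definition alg_ip :: "('a::times \<Rightarrow> 'a) \<Rightarrow> 'a \<Rightarrow> 'a \<Rightarrow> 'a" where
  "alg_ip st a b = st a * b"

definition adjointable_to_alg ::
  "('a \<Rightarrow> 'a) \<Rightarrow> ('m \<Rightarrow> 'm \<Rightarrow> 'a::times) \<Rightarrow> ('m \<Rightarrow> 'a) \<Rightarrow> bool" where
  "adjointable_to_alg st ip F \<longleftrightarrow> (\<exists>G. \<forall>x a. alg_ip st (F x) a = ip x (G a))"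

definition theta :: "('m \<Rightarrow> 'm \<Rightarrow> 'a::times) \<Rightarrow> 'a \<Rightarrow> 'm \<Rightarrow> 'm \<Rightarrow> 'a" where
  "theta ip a y z = a * ip y z"

definition A_compact ::
  "(complex \<Rightarrow> 'a::{real_normed_algebra} \<Rightarrow> 'a) \<Rightarrow> ('m::real_normed_vector \<Rightarrow> 'm \<Rightarrow> 'a) \<Rightarrow>
   ('m \<Rightarrow> 'a) \<Rightarrow> bool" where
  "A_compact scA ip F \<longleftrightarrow>
     (\<forall>e>0. \<exists>n::nat. \<exists>c a y.
        onorm (\<lambda>z. F z - (\<Sum>i<n. scA (c i) (theta ip (a i) (y i) z))) < e)"

end

theory Submission
  imports Defs
begin

lemma ring_W:
  fixes a U V :: "'r::ring"
  assumes "U = (a + a) + a * U" and "V = - (a + a) - a * V"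
  shows "a * (V + U + V * U) = - (V + U + V * U)"
proof -
  have aU: "a * U = U - (a + a)" using assms(1) by (simp add: algebra_simps)
  have aV: "a * V = - (a + a) - V" using assms(2) by (simp add: algebra_simps)
  have "a * (V + U + V * U) = a * V + a * U + (a * V) * U"
    by (simp add: distrib_left mult.assoc)
  also have "\<dots> = (- (a + a) - V) + (U - (a + a)) + (- (a + a) - V) * U"
    by (simp only: aU aV)
  also have "\<dots> = - (a+a) - V + U - (a+a) - (a * U + a * U) - V * U"
    by (simp add: algebra_simps)
  also have "\<dots> = - (V + U + V * U)" by (simp only: aU) (simp add: algebra_simps)
  finally show ?thesis .
qed

locale cstar =
  fixes scA :: "complex \<Rightarrow> 'a::{real_normed_algebra,banach} \<Rightarrow> 'a"
    and st :: "'a \<Rightarrow> 'a"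
  assumes cs: "cstar_algebra scA st"
begin

lemma sc: "complex_scaling scA" using cs unfolding cstar_algebra_def by blast
lemma sc_norm: "norm (scA c v) = cmod c * norm v" using sc by (simp add: complex_scaling_def)
lemma sc_real: "scA (complex_of_real r) v = r *\<^sub>R v" using sc by (simp add: complex_scaling_def)
lemma sc_mult: "scA (c * d) v = scA c (scA d v)" using sc by (simp add: complex_scaling_def)
lemma sc_one: "scA 1 v = v" using sc_real[of 1 v] by simp
lemma sc_mul_left: "scA c (a * b) = scA c a * b" using cs unfolding cstar_algebra_def by blast
lemma sc_mul_right: "scA c (a * b) = a * scA c b" using cs unfolding cstar_algebra_def by blast
lemma st_add: "st (a + b) = st a + st b" using cs unfolding cstar_algebra_def by blast
lemma st_sc: "st (scA c a) = scA (cnj c) (st a)" using cs unfolding cstar_algebra_def by blast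
lemma st_st[simp]: "st (st a) = a" using cs unfolding cstar_algebra_def by blast
lemma st_mult: "st (a * b) = st b * st a" using cs unfolding cstar_algebra_def by blast
lemma cstar_id: "norm (st a * a) = (norm a)\<^sup>2" using cs unfolding cstar_algebra_def by blast

lemma st_zero[simp]: "st 0 = 0"
  using st_add[of 0 0] by simp
lemma st_minus: "st (- a) = - st a"
proof -
  have "st a + st (- a) = 0" using st_add[of a "-a"] by simp
  then show ?thesis by (metis neg_eq_iff_add_eq_0)
qed
lemma st_diff: "st (a - b) = st a - st b"
  using st_add[of a "-b"] st_minus[of b] by simp
lemma st_scaleR: "st (r *\<^sub>R a) = r *\<^sub>R st a"
  using st_sc[of "complex_of_real r" a] by (simp add: sc_real)

lemma norm_st_le: "norm a \<le> norm (st a)"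
proof (cases "a = 0")
  case True then show ?thesis by simp
next
  case False
  have "(norm a)\<^sup>2 \<le> norm (st a) * norm a"
    using cstar_id[of a] norm_mult_ineq[of "st a" a] by simp
  then show ?thesis using False by (simp add: power2_eq_square)
qed

lemma norm_st[simp]: "norm (st a) = norm a"
  using norm_st_le[of a] norm_st_le[of "st a"] by simp

lemma cstar_id2: "norm (a * st a) = (norm a)\<^sup>2"
  using cstar_id[of "st a"] by simp

lemma sc_neg1: "scA (-1) v = - v"
  using sc_real[of "-1" v] by simp

lemma sc_ii: "scA \<i> (scA \<i> v) = - v"
proof -
  have "scA \<i> (scA \<i> v) = scA (-1) v" by (simp add: sc_mult[symmetric])
  then show ?thesis by (simp add: sc_neg1)
qed

lemma sc_mi: "scA (- \<i>) v = - scA \<i> v"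
proof -
  have "scA (- \<i>) v = scA (-1) (scA \<i> v)" by (simp add: sc_mult[symmetric])
  then show ?thesis by (simp add: sc_neg1)
qed

lemma fix_unique:
  fixes a c X Y :: 'a
  assumes "norm a < 1" "X = c + a * X" "Y = c + a * Y"
  shows "X = Y"
proof -
  have "X - Y = (c + a * X) - (c + a * Y)" using assms(2,3) by (rule arg_cong2[where f="(-)"])
  also have "\<dots> = a * (X - Y)" by (simp add: algebra_simps)
  finally have eq: "X - Y = a * (X - Y)" .
  have "norm (X - Y) = norm (a * (X - Y))" using eq by (rule arg_cong)
  also have "\<dots> \<le> norm a * norm (X - Y)" by (rule norm_mult_ineq)
  finally have "norm (X - Y) \<le> norm a * norm (X - Y)" .
  then have "(1 - norm a) * norm (X - Y) \<le> 0" by (simp add: algebra_simps)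
  moreover have "1 - norm a > 0" using assms(1) by simp
  ultimately have "norm (X - Y) \<le> 0" by (simp add: mult_le_0_iff)
  then show ?thesis by simp
qed

lemma fix_exists:
  fixes a c :: 'a
  assumes "norm a < 1"
  shows "\<exists>X. X = c + a * X"
proof -
  have "\<forall>x y. dist (c + a * x) (c + a * y) \<le> norm a * dist x y"
  proof (intro allI)
    fix x y
    have "dist (c + a * x) (c + a * y) = norm (a * (x - y))" by (simp add: dist_norm algebra_simps)
    also have "\<dots> \<le> norm a * norm (x - y)" by (rule norm_mult_ineq)
    finally show "dist (c + a * x) (c + a * y) \<le> norm a * dist x y" by (simp add: dist_norm)
  qed
  then have "\<exists>!x. (\<lambda>X. c + a * X) x = x"
    using banach_fix_type[of "norm a" "\<lambda>X. c + a * X"] assms by simp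
  then show ?thesis by metis
qed

end

primrec Qs :: "'r::ring \<Rightarrow> nat \<Rightarrow> 'r" where
  "Qs U 0 = 0"
| "Qs U (Suc j) = U + Qs U j + U * Qs U j"

lemma Qs_comm: "Qs U j * U = U * Qs U j"
proof (induction j)
  case 0 then show ?case by simp
next
  case (Suc j)
  have "Qs U (Suc j) * U = U * U + Qs U j * U + U * (Qs U j * U)"
    by (simp add: distrib_right mult.assoc)
  also have "\<dots> = U * U + U * Qs U j + U * (U * Qs U j)" by (simp only: Suc)
  also have "\<dots> = U * Qs U (Suc j)" by (simp add: distrib_left)
  finally show ?case .
qed

lemma Qs_step: "w + Qs U (Suc j) * w = (w + Qs U j * w) + U * (w + Qs U j * w)"
  by (simp add: algebra_simps mult.assoc)

lemma Qs_tele: "(U * y) + Qs U j * (U * y) = (y + Qs U (Suc j) * y) - (y + Qs U j * y)"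
proof -
  have "Qs U j * (U * y) = U * (Qs U j * y)"
    by (metis Qs_comm mult.assoc)
  then show ?thesis by (simp add: algebra_simps)
qed

lemma Qs_ideal:
  assumes "U = bu * s"
  shows "\<exists>b. Qs U j = b * s"
proof (induction j)
  case 0 then show ?case by (rule exI[of _ 0]) simp
next
  case (Suc j)
  then obtain b where b: "Qs U j = b * s" by blast
  have "Qs U (Suc j) = (bu + b + U * b) * s"
    by (simp add: b assms[symmetric] distrib_right mult.assoc)
  then show ?case by blast
qed

lemma sum_ideal:
  fixes Q :: "nat \<Rightarrow> 'r::ring"
  assumes "\<And>j. \<exists>b. Q j = b * s"
  shows "\<exists>b. (\<Sum>j<n. Q j) = b * s"
proof (induction n)
  case 0 then show ?case by (rule exI[of _ 0]) simp
next
  case (Suc n)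
  then obtain b where b: "(\<Sum>j<n. Q j) = b * s" by blast
  obtain c where c: "Q n = c * s" using assms by blast
  have "(\<Sum>j<Suc n. Q j) = (b + c) * s" by (simp add: b c distrib_right)
  then show ?case by blast
qed

context cstar
begin

lemma iso_Qs:
  fixes U :: 'a
  assumes iso: "\<And>w. norm (w + U * w) = norm w"
  shows "norm (w + Qs U j * w) = norm w"
proof (induction j)
  case 0 then show ?case by simp
next
  case (Suc j)
  then show ?case by (simp only: Qs_step iso)
qed

lemma avg_form:
  fixes U w :: 'a
  assumes "n \<ge> 1"
  shows "w + ((1 / real n) *\<^sub>R (\<Sum>j<n. Qs U j)) * w = (1 / real n) *\<^sub>R (\<Sum>j<n. w + Qs U j * w)"
proof -
  have "(\<Sum>j<n. w + Qs U j * w) = real n *\<^sub>R w + (\<Sum>j<n. Qs U j) * w"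
    by (simp add: sum.distrib sum_distrib_right sum_constant_scaleR)
  then show ?thesis using assms by (simp add: scaleR_add_right)
qed

end

context cstar
begin

lemma approx_unit:
  fixes z :: 'a and n :: nat
  assumes n1: "n \<ge> 1"
  shows "\<exists>b. (\<forall>w. norm (w + (b * st z) * w) \<le> norm w) \<and>
             (norm (z + (b * st z) * z))^4 \<le> 3 * (norm z)^4 / real n"
proof (cases "z = 0")
  case True
  show ?thesis by (rule exI[of _ 0]) (simp add: True)
next
  case False
  define m where "m = z * st z"
  have nm: "norm m = (norm z)^2" by (simp add: m_def cstar_id2)
  have nm_pos: "norm m > 0" using False nm by simp
  have stm: "st m = m" by (simp add: m_def st_mult)
  define k where "k = 1 / (2 * norm m)"
  have kpos: "k > 0" using nm_pos by (simp add: k_def)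
  define ca where "ca = scA \<i> (k *\<^sub>R z)"
  define a where "a = ca * st z"
  have a_alt: "a = scA \<i> (k *\<^sub>R m)"
  proof -
    have "scA \<i> (k *\<^sub>R m) = scA \<i> ((k *\<^sub>R z) * st z)" by (simp add: m_def)
    also have "\<dots> = ca * st z" by (simp only: sc_mul_left ca_def)
    finally show ?thesis by (simp add: a_def)
  qed
  have na: "norm a = 1/2"
    using nm_pos by (simp add: a_alt sc_norm k_def)
  have sta: "st a = - a"
    by (simp add: a_alt st_sc st_scaleR stm sc_mi)
  have na1: "norm a < 1" using na by simp
  obtain U where U: "U = (a + a) + a * U" using fix_exists[OF na1] by blast
  have Ua: "U * a = a * U"
  proof (rule fix_unique[OF na1])
    have "U * a = ((a + a) + a * U) * a" using U by (rule arg_cong[where f="\<lambda>x. x * a"])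
    also have "\<dots> = (a + a) * a + a * (U * a)" by (simp add: distrib_right mult.assoc)
    finally show "U * a = (a + a) * a + a * (U * a)" .
    have "a * U = a * ((a + a) + a * U)" using U by (rule arg_cong[where f="\<lambda>x. a * x"])
    also have "\<dots> = (a + a) * a + a * (a * U)" by (simp add: distrib_right distrib_left mult.assoc)
    finally show "a * U = (a + a) * a + a * (a * U)" .
  qed
  define V where "V = st U"
  have Va: "V * a = a * V"
  proof -
    have "st (U * a) = st (a * U)" by (simp only: Ua)
    then have "- (a * V) = - (V * a)" by (simp add: st_mult sta V_def)
    then show ?thesis by simp
  qed
  have Veq: "V = - (a + a) - a * V"
  proof -
    have "V = st ((a + a) + a * U)" unfolding V_def using U by (rule arg_cong)
    also have "\<dots> = - (a + a) - V * a" by (simp add: st_add st_mult sta V_def st_minus)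
    finally show ?thesis by (simp add: Va)
  qed
  define W where "W = V + U + V * U"
  have aW: "a * W = - W" unfolding W_def by (rule ring_W[OF U Veq])
  have W0: "W = 0"
  proof -
    have "norm W = norm (a * W)" by (simp add: aW)
    also have "\<dots> \<le> norm a * norm W" by (rule norm_mult_ineq)
    finally have "norm W \<le> 1/2 * norm W" by (simp add: na)
    then show ?thesis by simp
  qed
  have iso: "norm (w + U * w) = norm w" for w
  proof -
    have "st (w + U * w) * (w + U * w) = st w * w + st w * (W * w)"
      by (simp add: st_add st_mult V_def[symmetric] W_def algebra_simps)
    then have "st (w + U * w) * (w + U * w) = st w * w" by (simp add: W0)
    then have "(norm (w + U * w))^2 = (norm w)^2" by (metis cstar_id)
    then show ?thesis by (simp add: power2_eq_iff_nonneg)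
  qed
  have Uin: "U = (ca + ca + U * ca) * st z"
  proof -
    have "U = (a + a) + U * a" using U by (simp add: Ua)
    then show ?thesis by (simp add: a_def distrib_right mult.assoc)
  qed
  obtain bs where bs: "(\<Sum>j<n. Qs U j) = bs * st z"
    using sum_ideal[of "Qs U" "st z" n] Qs_ideal[OF Uin] by blast
  define b where "b = (1 / real n) *\<^sub>R bs"
  define Q where "Q = (1 / real n) *\<^sub>R (\<Sum>j<n. Qs U j)"
  have bQ: "b * st z = Q" by (simp add: b_def Q_def bs)
  define Vn where "Vn w = w + Q * w" for w
  have Vn_avg: "Vn w = (1 / real n) *\<^sub>R (\<Sum>j<n. w + Qs U j * w)" for w
    unfolding Vn_def Q_def by (rule avg_form[OF n1])
  have npos: "real n > 0" using n1 by simp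
  have Vn_le: "norm (Vn w) \<le> norm w" for w
  proof -
    have "norm (\<Sum>j<n. w + Qs U j * w) \<le> (\<Sum>j<n. norm (w + Qs U j * w))" by (rule norm_sum)
    also have "\<dots> = real n * norm w" by (simp add: iso_Qs[OF iso])
    finally have "norm (\<Sum>j<n. w + Qs U j * w) \<le> real n * norm w" .
    then show ?thesis using npos by (simp add: Vn_avg field_simps)
  qed
  have Vn_mult: "Vn (x * r) = Vn x * r" for x r by (simp add: Vn_def distrib_right mult.assoc)
  have Vn_C: "(norm (Vn x))^2 \<le> norm (Vn (x * st x))" for x
  proof -
    define y where "y = Vn x"
    have "y * st y = Vn (x * st y)" by (simp add: y_def Vn_mult)
    also have "x * st y = st (y * st x)" by (simp add: st_mult)
    also have "y * st x = Vn (x * st x)" by (simp add: y_def Vn_mult)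
    finally have eq: "y * st y = Vn (st (Vn (x * st x)))" .
    have "(norm y)^2 = norm (y * st y)" by (simp add: cstar_id2)
    also have "\<dots> \<le> norm (st (Vn (x * st x)))" by (simp only: eq Vn_le)
    finally show ?thesis by (simp add: y_def)
  qed
  have Vn_tele: "norm (Vn (U * y)) \<le> 2 * norm y / real n" for y
  proof -
    have "(\<Sum>j<n. U * y + Qs U j * (U * y)) = (\<Sum>j<n. (y + Qs U (Suc j) * y) - (y + Qs U j * y))"
      by (simp only: Qs_tele)
    also have "\<dots> = (y + Qs U n * y) - (y + Qs U 0 * y)" by (rule sum_lessThan_telescope)
    finally have s: "(\<Sum>j<n. U * y + Qs U j * (U * y)) = (y + Qs U n * y) - y" by simp
    have "norm ((y + Qs U n * y) - y) \<le> norm (y + Qs U n * y) + norm y" by (rule norm_triangle_ineq4)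
    also have "\<dots> = 2 * norm y" by (simp add: iso_Qs[OF iso])
    finally have "norm (\<Sum>j<n. U * y + Qs U j * (U * y)) \<le> 2 * norm y" by (simp only: s)
    then show ?thesis using npos by (simp add: Vn_avg field_simps)
  qed
  have UaU: "U - a * U = a + a"
  proof -
    have "U - a * U = ((a + a) + a * U) - a * U" using U by (rule arg_cong[where f="\<lambda>x. x - a * U"])
    then show ?thesis by simp
  qed
  have aa: "(a + a) * w = U * (w - a * w)" for w
  proof -
    have "U * (w - a * w) = U * w - (U * a) * w" by (simp add: right_diff_distrib mult.assoc)
    also have "\<dots> = (U - a * U) * w" by (simp add: Ua left_diff_distrib)
    finally show ?thesis by (simp add: UaU)
  qed
  have Vaa: "norm (Vn (a * a)) \<le> 3 / (4 * real n)"
  proof -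
    have "Vn ((a + a) * a) = Vn (a * a) + Vn (a * a)" by (simp add: Vn_def algebra_simps)
    moreover have "norm (Vn ((a + a) * a)) \<le> 2 * norm (a - a * a) / real n"
      by (simp only: aa Vn_tele)
    moreover have "norm (a - a * a) \<le> 3/4"
    proof -
      have "norm (a - a * a) \<le> norm a + norm (a * a)" by (rule norm_triangle_ineq4)
      also have "norm (a * a) \<le> norm a * norm a" by (rule norm_mult_ineq)
      finally show ?thesis by (simp add: na)
    qed
    ultimately have A: "norm (Vn (a * a) + Vn (a * a)) \<le> 2 * norm (a - a * a) / real n"
      and B: "norm (a - a * a) \<le> 3/4" by simp_all
    have "Vn (a * a) + Vn (a * a) = 2 *\<^sub>R Vn (a * a)" by (simp add: scaleR_2)
    then have C: "norm (Vn (a * a) + Vn (a * a)) = 2 * norm (Vn (a * a))" by simp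
    have "2 * norm (a - a * a) / real n \<le> 2 * (3/4) / real n"
      using B npos by (intro divide_right_mono) simp_all
    then have "2 * norm (Vn (a * a)) \<le> 2 * (3/4) / real n" using A C by linarith
    then show ?thesis by (simp add: field_simps)
  qed
  have mm: "m * m = (- (1 / (k * k))) *\<^sub>R (a * a)"
  proof -
    define p where "p = k *\<^sub>R m"
    have "a * a = scA \<i> p * scA \<i> p" by (simp add: a_alt p_def)
    also have "\<dots> = scA \<i> (p * scA \<i> p)" by (simp only: sc_mul_left)
    also have "\<dots> = scA \<i> (scA \<i> (p * p))" by (simp only: sc_mul_right)
    also have "\<dots> = - (p * p)" by (simp only: sc_ii)
    also have "\<dots> = - ((k * k) *\<^sub>R (m * m))" by (simp add: p_def)
    finally show ?thesis using kpos by simp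
  qed
  have Vn_scale: "Vn (r *\<^sub>R x) = r *\<^sub>R Vn x" for r x by (simp add: Vn_def scaleR_add_right)
  have Vmm: "norm (Vn (m * m)) \<le> 3 * (norm m)^2 / real n"
  proof -
    have "Vn (m * m) = (- (1 / (k * k))) *\<^sub>R Vn (a * a)" by (simp only: mm Vn_scale)
    then have "norm (Vn (m * m)) = \<bar>- (1 / (k * k))\<bar> * norm (Vn (a * a))" by simp
    then have "norm (Vn (m * m)) = (1 / (k * k)) * norm (Vn (a * a))"
      using kpos by simp
    also have "\<dots> \<le> (1 / (k * k)) * (3 / (4 * real n))"
      using Vaa kpos by (intro mult_left_mono) simp_all
    also have "\<dots> = 3 * (norm m)^2 / real n"
      using nm_pos npos by (simp add: k_def field_simps power2_eq_square)
    finally show ?thesis .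
  qed
  have h1: "(norm (Vn m))^2 \<le> 3 * (norm m)^2 / real n"
    using Vn_C[of m] Vmm by (simp add: stm)
  have h2: "(norm (Vn z))^2 \<le> norm (Vn m)"
    using Vn_C[of z] by (simp add: m_def)
  have "(norm (Vn z))^4 = ((norm (Vn z))^2)^2" by simp
  also have "\<dots> \<le> (norm (Vn m))^2" by (rule power_mono[OF h2]) simp
  also have "\<dots> \<le> 3 * (norm z)^4 / real n" using h1 by (simp add: nm)
  finally have fin: "(norm (Vn z))^4 \<le> 3 * (norm z)^4 / real n" .
  show ?thesis
  proof (intro exI[of _ b] conjI allI)
    fix w show "norm (w + (b * st z) * w) \<le> norm w" using Vn_le[of w] by (simp add: bQ Vn_def)
  next
    show "(norm (z + (b * st z) * z))^4 \<le> 3 * (norm z)^4 / real n" using fin by (simp add: bQ Vn_def)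
  qed
qed

end

theorem lemma3p2:
  fixes scA :: "complex \<Rightarrow> 'a::{real_normed_algebra,banach} \<Rightarrow> 'a"
    and st :: "'a \<Rightarrow> 'a"
    and scM :: "complex \<Rightarrow> 'm::{real_normed_vector,banach} \<Rightarrow> 'm"
    and act :: "'m \<Rightarrow> 'a \<Rightarrow> 'm"
    and ip :: "'m \<Rightarrow> 'm \<Rightarrow> 'a"
    and F :: "'m \<Rightarrow> 'a"
    and K :: real
  assumes "hilbert_cstar_module scA st scM act ip"
    and "bounded_linear F"
    and "adjointable_to_alg st ip F"
    and "\<not> A_compact scA ip F"
    and "K > 0"
  shows "\<exists>\<delta>>0. \<forall>z::'a. \<exists>x::'m. norm x \<le> 1 \<and>
           (\<forall>\<alpha>::'a. norm \<alpha> \<le> K \<longrightarrow> norm (z * \<alpha> - F x) > \<delta>) \<and>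
           norm (F x) > \<delta>"
proof (rule ccontr)
  assume neg: "\<not> ?thesis"
  have hm: "hilbert_cstar_module scA st scM act ip" by fact
  have csa: "cstar_algebra scA st" using hm by (simp add: hilbert_cstar_module_def)
  interpret cstar scA st by (rule cstar.intro[OF csa])
  have ip_sym: "ip y x = st (ip x y)" for x y
    using hm unfolding hilbert_cstar_module_def by blast
  obtain G where G: "\<And>x a. alg_ip st (F x) a = ip x (G a)"
    using assms(3) unfolding adjointable_to_alg_def by blast
  have ipG: "ip (G w) x = st w * F x" for w x
  proof -
    have "ip (G w) x = st (ip x (G w))" by (rule ip_sym)
    also have "\<dots> = st (st (F x) * w)" by (simp add: G[symmetric] alg_ip_def)
    also have "\<dots> = st w * F x" by (simp add: st_mult)
    finally show ?thesis .
  qed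
  have Flin: "linear F" using assms(2) by (rule bounded_linear.linear)
  have F0: "F 0 = 0" using Flin by (rule linear_0)
  have Fscale: "F (r *\<^sub>R x) = r *\<^sub>R F x" for r x using Flin by (rule linear_scale)
  have "A_compact scA ip F"
    unfolding A_compact_def
  proof (intro allI impI)
    fix e :: real
    assume epos: "e > 0"
    define \<delta> where "\<delta> = e / 4"
    have dpos: "\<delta> > 0" using epos by (simp add: \<delta>_def)
    from neg dpos obtain z :: 'a where hz: "\<And>x. norm x \<le> 1 \<Longrightarrow>
        \<not> ((\<forall>\<alpha>::'a. norm \<alpha> \<le> K \<longrightarrow> norm (z * \<alpha> - F x) > \<delta>) \<and> norm (F x) > \<delta>)"
      by blast
    have halpha: "\<exists>\<alpha>. norm \<alpha> \<le> K \<and> norm (z * \<alpha> - F x) \<le> \<delta>" if "norm x \<le> 1" for x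
    proof (cases "norm (F x) > \<delta>")
      case True
      then show ?thesis using hz[OF that] by (auto simp: not_less)
    next
      case False
      then show ?thesis using assms(5) by (intro exI[of _ 0]) simp
    qed
    define t where "t = (e / (4 * K)) ^ 4"
    have tpos: "t > 0" using epos assms(5) by (simp add: t_def)
    define n :: nat where "n = nat \<lceil>3 * (norm z)^4 / t\<rceil> + 1"
    have n1: "n \<ge> 1" by (simp add: n_def)
    have nbig: "3 * (norm z)^4 / t \<le> real n"
      unfolding n_def by linarith
    have "3 * (norm z)^4 / real n \<le> t"
    proof -
      have "3 * (norm z)^4 \<le> t * real n" using nbig tpos by (simp add: field_simps)
      then show ?thesis using n1 by (simp add: field_simps)
    qed
    obtain b where hb1: "\<And>w. norm (w + (b * st z) * w) \<le> norm w"
      and hb2: "(norm (z + (b * st z) * z))^4 \<le> 3 * (norm z)^4 / real n"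
      using approx_unit[OF n1, of z] by blast
    define P where "P = b * st z"
    have zP4: "(norm (z + P * z))^4 \<le> (e / (4 * K)) ^ 4"
      using hb2 \<open>3 * (norm z)^4 / real n \<le> t\<close> by (simp add: P_def t_def)
    have zP: "norm (z + P * z) \<le> e / (4 * K)"
    proof -
      have "0 \<le> e / (4 * K)" using epos assms(5) by simp
      then show ?thesis using zP4 power_mono_iff[of "norm (z + P * z)" "e / (4 * K)" 4] by simp
    qed
    define f where "f x = F x + P * F x" for x
    have funit: "norm (f x) \<le> e / 2" if nx: "norm x \<le> 1" for x
    proof -
      obtain \<alpha> where al: "norm \<alpha> \<le> K" and al2: "norm (z * \<alpha> - F x) \<le> \<delta>"
        using halpha[OF nx] by blast
      have "f x = ((F x - z * \<alpha>) + P * (F x - z * \<alpha>)) + (z + P * z) * \<alpha>"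
        by (simp add: f_def algebra_simps)
      then have "norm (f x) \<le> norm ((F x - z * \<alpha>) + P * (F x - z * \<alpha>)) + norm ((z + P * z) * \<alpha>)"
        by (simp add: norm_triangle_ineq)
      also have "\<dots> \<le> norm (F x - z * \<alpha>) + norm (z + P * z) * norm \<alpha>"
        using hb1[of "F x - z * \<alpha>"] norm_mult_ineq[of "z + P * z" \<alpha>] by (simp add: P_def)
      also have "\<dots> \<le> \<delta> + (e / (4 * K)) * K"
      proof -
        have "norm (F x - z * \<alpha>) \<le> \<delta>" using al2 by (simp add: norm_minus_commute)
        moreover have "norm (z + P * z) * norm \<alpha> \<le> (e / (4 * K)) * K"
          using zP al epos assms(5) by (intro mult_mono) simp_all
        ultimately show ?thesis by linarith
      qed
      also have "\<dots> = e / 2" using assms(5) by (simp add: \<delta>_def field_simps)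
      finally show ?thesis .
    qed
    have fbound: "norm (f x) \<le> e / 2 * norm x" for x
    proof (cases "x = 0")
      case True then show ?thesis by (simp add: f_def F0)
    next
      case False
      define x' where "x' = (1 / norm x) *\<^sub>R x"
      have nx': "norm x' \<le> 1" using False by (simp add: x'_def)
      have "f x = norm x *\<^sub>R f x'"
        using False by (simp add: f_def x'_def Fscale scaleR_add_right)
      then have "norm (f x) = norm x * norm (f x')" by simp
      also have "\<dots> \<le> norm x * (e / 2)" using funit[OF nx'] by (intro mult_left_mono) simp_all
      finally show ?thesis by (simp add: mult.commute)
    qed
    have feq: "(\<lambda>x. F x - (\<Sum>i<(1::nat). scA ((\<lambda>_. 1) i) (theta ip ((\<lambda>_. - b) i) ((\<lambda>_. G z) i) x))) = f"
      by (rule ext) (simp add: f_def theta_def sc_one ipG P_def mult.assoc sum_negf sum_constant_scaleR card_lessThan)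
    have "onorm f \<le> e / 2" using epos fbound by (intro onorm_bound) simp_all
    then have "onorm f < e" using epos by simp
    then have fin: "onorm (\<lambda>x. F x - (\<Sum>i<(1::nat). scA ((\<lambda>_. 1) i) (theta ip ((\<lambda>_. - b) i) ((\<lambda>_. G z) i) x))) < e"
      by (simp only: feq)
    define cc where "cc = (\<lambda>_::nat. (1::complex))"
    define aa where "aa = (\<lambda>_::nat. - b)"
    define yy where "yy = (\<lambda>_::nat. G z)"
    have fin2: "onorm (\<lambda>x. F x - (\<Sum>i<(1::nat). scA (cc i) (theta ip (aa i) (yy i) x))) < e"
      using fin by (simp only: cc_def aa_def yy_def)
    show "\<exists>(n::nat) c a y. onorm (\<lambda>z. F z - (\<Sum>i<n. scA (c i) (theta ip (a i) (y i) z))) < e"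
      using fin2 by blast
  qed
  then show False using assms(4) by simp
qed

end
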